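(* Let $M$ and $M'$ be two stable matchings in an instance $I$ of SPA-S, and let $M^\lor$ be the assignment defined from $M,M'$ in the context. If a lecturer $l_k$ is undersubscribed in $M^\lor$, then $l_k$ is undersubscribed in both $M$ and $M'$.
   Context: An instance $I$ of SPA-S consists of a finite set $\mathcal{S}$ of students, a finite set $\mathcal{P}$ of projects and a finite set $\mathcal{L}$ of lecturers. Each student $s_i$ ranks a subset $A_i\subseteq\mathcal{P}$ (its acceptable projects) in strict order. Each project is offered by exactly one lecturer; lecturer $l_k$ offers a nonempty set $P_k\subseteq\mathcal{P}$, the $P_k$ partitioning $\mathcal{P}$. Each lecturer $l_k$ ranks in strict order the students who find at least one project of $P_k$ acceptable. Projects have capacities $c_j\in\mathbb{Z}^+$, lecturers have capacities $d_k\in\mathbb{Z}^+$ with $\max\{c_j:p_j\in P_k\}\le d_k\le\sum\{c_j:p_j\in P_k\}$. A pair $(s_i,p_j)$, $p_j$ offered by $l_k$, is acceptable if $p_j\in A_i$ and $s_i$ is on $l_k$'s list. A matching $M$ is a set of acceptable pairs with each student in at most one pair, $|M(p_j)|\le c_j$, $|M(l_k)|\le d_k$, where for an assignment $M$ (a set of acceptable pairs), $M(s_i)$, $M(p_j)$, $M(l_k)$ denote the project of $s_i$, the students assigned to $p_j$, and the students assigned to projects of $l_k$. Undersubscribed/full means fewer than/exactly capacity many assigned students. An acceptable pair $(s_i,p_j)\notin M$ ($p_j$ offered by $l_k$) blocks $M$ if ($s_i$ is unassigned or prefers $p_j$ to $M(s_i)$) and one of: (P1) $p_j$ and $l_k$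 undersubscribed; (P2) $p_j$ undersubscribed, $l_k$ full, $s_i\in M(l_k)$; (P3) $p_j$ undersubscribed, $l_k$ full, $l_k$ prefers $s_i$ to the worst student of $M(l_k)$; (P4) $p_j$ full and $l_k$ prefers $s_i$ to the worst student of $M(p_j)$. $M$ is stable if it has no blocking pair. Given stable matchings $M,M'$, $M^\lor$ is the assignment in which each student unassigned in both $M$ and $M'$ is unassigned, each student assigned to the same project in both is assigned to that project, and every other student is assigned to the worse (in her preference) of her projects in $M$ and $M'$. *)

theory Defs
  imports Main
begin

text \<open>An SPA-S instance. Student preferences: (p,q) \<in> spref I s means s prefers p to q.
  Lecturer preferences: (s,t) \<in> lpref I l means l prefers s to t.\<close>

record ('s,'p,'l) spa =
  Stu   :: "'s set"
  Proj  :: "'p set"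
  Lec   :: "'l set"
  acc   :: "'s \<Rightarrow> 'p set"
  spref :: "'s \<Rightarrow> ('p \<times> 'p) set"
  lec   :: "'p \<Rightarrow> 'l"
  lpref :: "'l \<Rightarrow> ('s \<times> 's) set"
  pcap  :: "'p \<Rightarrow> nat"
  lcap  :: "'l \<Rightarrow> nat"

definition offered :: "('s,'p,'l) spa \<Rightarrow> 'l \<Rightarrow> 'p set" where
  "offered I l = {p \<in> Proj I. lec I p = l}"

definition lstudents :: "('s,'p,'l) spa \<Rightarrow> 'l \<Rightarrow> 's set" where
  "lstudents I l = {s \<in> Stu I. acc I s \<inter> offered I l \<noteq> {}}"

definition spa_instance :: "('s,'p,'l) spa \<Rightarrow> bool" where
  "spa_instance I \<longleftrightarrow>
     finite (Stu I) \<and> finite (Proj I) \<and> finite (Lec I) \<and>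
     (\<forall>s\<in>Stu I. acc I s \<subseteq> Proj I \<and> spref I s \<subseteq> acc I s \<times> acc I s
                 \<and> strict_linear_order_on (acc I s) (spref I s)) \<and>
     (\<forall>p\<in>Proj I. lec I p \<in> Lec I \<and> pcap I p > 0) \<and>
     (\<forall>l\<in>Lec I. offered I l \<noteq> {} \<and>
        lpref I l \<subseteq> lstudents I l \<times> lstudents I l \<and>
        strict_linear_order_on (lstudents I l) (lpref I l) \<and>
        lcap I l > 0 \<and>
        Max (pcap I ` offered I l) \<le> lcap I l \<and>
        lcap I l \<le> (\<Sum>p\<in>offered I l. pcap I p))"

definition acceptable :: "('s,'p,'l) spa \<Rightarrow> 's \<Rightarrow> 'p \<Rightarrow> bool" where
  "acceptable I s p \<longleftrightarrow> s \<in> Stu I \<and> p \<in> acc I s \<and> s \<in> lstudents I (lec I p)"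

definition Mproj :: "('s \<times> 'p) set \<Rightarrow> 'p \<Rightarrow> 's set" where
  "Mproj M p = {s. (s,p) \<in> M}"

definition Mlec :: "('s,'p,'l) spa \<Rightarrow> ('s \<times> 'p) set \<Rightarrow> 'l \<Rightarrow> 's set" where
  "Mlec I M l = {s. \<exists>p. (s,p) \<in> M \<and> lec I p = l}"

definition assigned :: "('s \<times> 'p) set \<Rightarrow> 's \<Rightarrow> bool" where
  "assigned M s \<longleftrightarrow> (\<exists>p. (s,p) \<in> M)"

definition Mstu :: "('s \<times> 'p) set \<Rightarrow> 's \<Rightarrow> 'p" where
  "Mstu M s = (THE p. (s,p) \<in> M)"

definition matching :: "('s,'p,'l) spa \<Rightarrow> ('s \<times> 'p) set \<Rightarrow> bool" where
  "matching I M \<longleftrightarrow>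
     (\<forall>(s,p)\<in>M. acceptable I s p) \<and>
     (\<forall>s p q. (s,p) \<in> M \<longrightarrow> (s,q) \<in> M \<longrightarrow> p = q) \<and>
     (\<forall>p\<in>Proj I. card (Mproj M p) \<le> pcap I p) \<and>
     (\<forall>l\<in>Lec I. card (Mlec I M l) \<le> lcap I l)"

definition proj_under :: "('s,'p,'l) spa \<Rightarrow> ('s \<times> 'p) set \<Rightarrow> 'p \<Rightarrow> bool" where
  "proj_under I M p \<longleftrightarrow> card (Mproj M p) < pcap I p"

definition proj_full :: "('s,'p,'l) spa \<Rightarrow> ('s \<times> 'p) set \<Rightarrow> 'p \<Rightarrow> bool" where
  "proj_full I M p \<longleftrightarrow> card (Mproj M p) = pcap I p"

definition lec_under :: "('s,'p,'l) spa \<Rightarrow> ('s \<times> 'p) set \<Rightarrow> 'l \<Rightarrow> bool" where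
  "lec_under I M l \<longleftrightarrow> card (Mlec I M l) < lcap I l"

definition lec_full :: "('s,'p,'l) spa \<Rightarrow> ('s \<times> 'p) set \<Rightarrow> 'l \<Rightarrow> bool" where
  "lec_full I M l \<longleftrightarrow> card (Mlec I M l) = lcap I l"

definition worst :: "('s,'p,'l) spa \<Rightarrow> 'l \<Rightarrow> 's set \<Rightarrow> 's \<Rightarrow> bool" where
  "worst I l X w \<longleftrightarrow> w \<in> X \<and> (\<forall>t\<in>X. t \<noteq> w \<longrightarrow> (t,w) \<in> lpref I l)"

definition prefers_to_worst :: "('s,'p,'l) spa \<Rightarrow> 'l \<Rightarrow> 's \<Rightarrow> 's set \<Rightarrow> bool" where
  "prefers_to_worst I l s X \<longleftrightarrow> (\<exists>w. worst I l X w \<and> (s,w) \<in> lpref I l)"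

definition blocking :: "('s,'p,'l) spa \<Rightarrow> ('s \<times> 'p) set \<Rightarrow> 's \<Rightarrow> 'p \<Rightarrow> bool" where
  "blocking I M s p \<longleftrightarrow>
     (let l = lec I p in
     acceptable I s p \<and> (s,p) \<notin> M \<and>
     (\<not> assigned M s \<or> (p, Mstu M s) \<in> spref I s) \<and>
     ((proj_under I M p \<and> lec_under I M l) \<or>
      (proj_under I M p \<and> lec_full I M l \<and> s \<in> Mlec I M l) \<or>
      (proj_under I M p \<and> lec_full I M l \<and> prefers_to_worst I l s (Mlec I M l)) \<or>
      (proj_full I M p \<and> prefers_to_worst I l s (Mproj M p))))"

definition stable :: "('s,'p,'l) spa \<Rightarrow> ('s \<times> 'p) set \<Rightarrow> bool" where
  "stable I M \<longleftrightarrow> matching I M \<and> (\<forall>s p. \<not> blocking I M s p)"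

definition Mjoin :: "('s,'p,'l) spa \<Rightarrow> ('s \<times> 'p) set \<Rightarrow> ('s \<times> 'p) set \<Rightarrow> ('s \<times> 'p) set" where
  "Mjoin I M M' =
     {(s,p). (s,p) \<in> M \<and> (s,p) \<in> M'} \<union>
     {(s,p). (s,p) \<in> M \<and> (\<exists>q. (s,q) \<in> M' \<and> (q,p) \<in> spref I s)} \<union>
     {(s,p). (s,p) \<in> M' \<and> (\<exists>q. (s,q) \<in> M \<and> (q,p) \<in> spref I s)} \<union>
     {(s,p). (s,p) \<in> M \<and> \<not> assigned M' s} \<union>
     {(s,p). (s,p) \<in> M' \<and> \<not> assigned M s}"

end

theory Submission
  imports Defs
begin

lemma stu_ord:
  assumes "spa_instance I" "s \<in> Stu I"
  shows "trans (spref I s) \<and> irrefl (spref I s) \<and> total_on (acc I s) (spref I s) \<and> acc I s \<subseteq> Proj I"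
  using assms by (simp add: spa_instance_def strict_linear_order_on_def)

lemma lec_ord:
  assumes "spa_instance I" "l \<in> Lec I"
  shows "trans (lpref I l) \<and> irrefl (lpref I l) \<and> total_on (lstudents I l) (lpref I l)
    \<and> lpref I l \<subseteq> lstudents I l \<times> lstudents I l \<and> lcap I l > 0"
  using assms by (simp add: spa_instance_def strict_linear_order_on_def)

lemma proj_facts:
  assumes "spa_instance I" "p \<in> Proj I"
  shows "lec I p \<in> Lec I \<and> pcap I p > 0"
  using assms by (simp add: spa_instance_def)

lemma m_acc:
  assumes "spa_instance I" "matching I N" "(s,p) \<in> N"
  shows "s \<in> Stu I \<and> p \<in> acc I s \<and> p \<in> Proj I \<and> s \<in> lstudents I (lec I p) \<and> lec I p \<in> Lec I"
proof -
  have a: "acceptable I s p" using assms(2,3) unfolding matching_def by auto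
  then have "s \<in> Stu I" "p \<in> acc I s" unfolding acceptable_def by auto
  with stu_ord[OF assms(1)] have "p \<in> Proj I" by blast
  with a proj_facts[OF assms(1)] show ?thesis unfolding acceptable_def by auto
qed

lemma m_fun:
  assumes "matching I N" "(s,p) \<in> N" "(s,q) \<in> N"
  shows "p = q"
  using assms unfolding matching_def by blast

lemma m_Mstu:
  assumes "matching I N" "(s,p) \<in> N"
  shows "Mstu N s = p"
  unfolding Mstu_def using m_fun[OF assms(1)] assms(2) by blast

lemma m_pcap:
  assumes "matching I N" "p \<in> Proj I"
  shows "card (Mproj N p) \<le> pcap I p"
  using assms unfolding matching_def by blast

lemma m_lcap:
  assumes "matching I N" "l \<in> Lec I"
  shows "card (Mlec I N l) \<le> lcap I l"
  using assms unfolding matching_def by blast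

lemma fin_proj:
  assumes "spa_instance I" "matching I N"
  shows "finite (Mproj N p)"
proof -
  have "Mproj N p \<subseteq> Stu I" using m_acc[OF assms] unfolding Mproj_def by auto
  moreover have "finite (Stu I)" using assms(1) unfolding spa_instance_def by auto
  ultimately show ?thesis by (rule finite_subset)
qed

lemma fin_lec:
  assumes "spa_instance I" "matching I N"
  shows "finite (Mlec I N l)"
proof -
  have "Mlec I N l \<subseteq> Stu I" using m_acc[OF assms] unfolding Mlec_def by auto
  moreover have "finite (Stu I)" using assms(1) unfolding spa_instance_def by auto
  ultimately show ?thesis by (rule finite_subset)
qed

lemma worst_exists:
  assumes "spa_instance I" "l \<in> Lec I" "finite X" "X \<noteq> {}" "X \<subseteq> lstudents I l"
  shows "\<exists>w. worst I l X w"
  using assms(3,4,5)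
proof (induction X rule: finite_ne_induct)
  case (singleton x)
  then show ?case unfolding worst_def by auto
next
  case (insert x F)
  then obtain w where w: "worst I l F w" by auto
  have o: "trans (lpref I l)" "total_on (lstudents I l) (lpref I l)"
    using lec_ord[OF assms(1,2)] by auto
  show ?case
  proof (cases "(x,w) \<in> lpref I l")
    case True
    then have "worst I l (insert x F) w" using w insert unfolding worst_def by auto
    then show ?thesis by blast
  next
    case False
    have "x \<noteq> w" using w insert unfolding worst_def by auto
    moreover have "w \<in> lstudents I l" "x \<in> lstudents I l" using w insert unfolding worst_def by auto
    ultimately have wx: "(w,x) \<in> lpref I l" using False o(2) unfolding total_on_def by blast
    have "worst I l (insert x F) x"
      unfolding worst_def
    proof (intro conjI ballI impI)
      fix t assume "t \<in> insert x F" "t \<noteq> x"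
      then have "t \<in> F" by auto
      then show "(t,x) \<in> lpref I l"
        using w wx o(1) unfolding worst_def trans_def by (cases "t = w") blast+
    qed auto
    then show ?thesis by blast
  qed
qed

lemma not_prefers:
  assumes "spa_instance I" "l \<in> Lec I" "finite X" "X \<noteq> {}" "X \<subseteq> lstudents I l"
    "s \<in> lstudents I l" "s \<notin> X" "\<not> prefers_to_worst I l s X"
  shows "\<forall>t\<in>X. (t,s) \<in> lpref I l"
proof
  fix t assume t: "t \<in> X"
  obtain w where w: "worst I l X w" using worst_exists[OF assms(1-5)] by blast
  have o: "trans (lpref I l)" "total_on (lstudents I l) (lpref I l)"
    using lec_ord[OF assms(1,2)] by auto
  have "(s,w) \<notin> lpref I l" using assms(8) w unfolding prefers_to_worst_def by blast
  moreover have "s \<noteq> w" "w \<in> lstudents I l" using w assms(5,7) unfolding worst_def by auto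
  ultimately have ws: "(w,s) \<in> lpref I l" using o(2) assms(6) unfolding total_on_def by blast
  show "(t,s) \<in> lpref I l"
  proof (cases "t = w")
    case True then show ?thesis using ws by simp
  next
    case False
    then have "(t,w) \<in> lpref I l" using w t unfolding worst_def by auto
    then show ?thesis using ws o(1) unfolding trans_def by blast
  qed
qed

lemma prefers:
  assumes "spa_instance I" "l \<in> Lec I" "finite X" "X \<subseteq> lstudents I l"
    "u \<in> X" "(t,u) \<in> lpref I l"
  shows "prefers_to_worst I l t X"
proof -
  obtain w where w: "worst I l X w" using worst_exists[OF assms(1-3) _ assms(4)] assms(5) by blast
  have o: "trans (lpref I l)" using lec_ord[OF assms(1,2)] by auto
  have "(t,w) \<in> lpref I l"
  proof (cases "u = w")
    case True then show ?thesis using assms(6) by simp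
  next
    case False
    then have "(u,w) \<in> lpref I l" using w assms(5) unfolding worst_def by auto
    then show ?thesis using assms(6) o unfolding trans_def by blast
  qed
  then show ?thesis using w unfolding prefers_to_worst_def by blast
qed


definition Pset :: "('s,'p,'l) spa \<Rightarrow> ('s \<times> 'p) set \<Rightarrow> ('s \<times> 'p) set \<Rightarrow> 's set" where
  "Pset I N N' = {s. assigned N s \<and> (\<not> assigned N' s \<or> (Mstu N s, Mstu N' s) \<in> spref I s)}"

definition Same :: "('s \<times> 'p) set \<Rightarrow> ('s \<times> 'p) set \<Rightarrow> 's set" where
  "Same N N' = {s. \<exists>p. (s,p) \<in> N \<and> (s,p) \<in> N'}"

lemma PS:
  assumes inst: "spa_instance I" and mN: "matching I N" and sN': "stable I N'"
    and sP: "s \<in> Pset I N N'" and sp: "(s,p) \<in> N"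
  shows "(\<forall>t\<in>Mproj N' p. (t,s) \<in> lpref I (lec I p)) \<and>
    (proj_under I N' p \<longrightarrow> lec_full I N' (lec I p) \<and> (\<forall>t\<in>Mlec I N' (lec I p). (t,s) \<in> lpref I (lec I p)))"
proof -
  define l where "l = lec I p"
  have mN': "matching I N'" using sN' unfolding stable_def by auto
  have nb: "\<not> blocking I N' s p" using sN' unfolding stable_def by auto
  have fa: "s \<in> Stu I" "p \<in> acc I s" "p \<in> Proj I" "s \<in> lstudents I l" "l \<in> Lec I"
    using m_acc[OF inst mN sp] l_def by auto
  have so: "irrefl (spref I s)" using stu_ord[OF inst fa(1)] by auto
  have Ms: "Mstu N s = p" using m_Mstu[OF mN sp] .
  have notin: "(s,p) \<notin> N'"
  proof
    assume "(s,p) \<in> N'"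
    then have "assigned N' s" "Mstu N' s = p" using m_Mstu[OF mN'] unfolding assigned_def by auto
    then show False using sP Ms so unfolding Pset_def irrefl_def by auto
  qed
  have stc: "\<not> assigned N' s \<or> (p, Mstu N' s) \<in> spref I s" using sP Ms unfolding Pset_def by auto
  have acc: "acceptable I s p" using fa l_def unfolding acceptable_def by auto
  have nb2: "\<not> ((proj_under I N' p \<and> lec_under I N' l) \<or>
      (proj_under I N' p \<and> lec_full I N' l \<and> s \<in> Mlec I N' l) \<or>
      (proj_under I N' p \<and> lec_full I N' l \<and> prefers_to_worst I l s (Mlec I N' l)) \<or>
      (proj_full I N' p \<and> prefers_to_worst I l s (Mproj N' p)))"
    using nb acc notin stc l_def unfolding blocking_def Let_def by auto
  have pc: "card (Mproj N' p) \<le> pcap I p" using m_pcap[OF mN' fa(3)] .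
  have lc: "card (Mlec I N' l) \<le> lcap I l" using m_lcap[OF mN' fa(5)] .
  have pos: "pcap I p > 0" "lcap I l > 0" using proj_facts[OF inst fa(3)] lec_ord[OF inst fa(5)] by auto
  have Xp_sub: "Mproj N' p \<subseteq> lstudents I l" using m_acc[OF inst mN'] l_def unfolding Mproj_def by auto
  have Xl_sub: "Mlec I N' l \<subseteq> lstudents I l" using m_acc[OF inst mN'] unfolding Mlec_def by auto
  have Xp_Xl: "Mproj N' p \<subseteq> Mlec I N' l" using l_def unfolding Mproj_def Mlec_def by auto
  have s_nXp: "s \<notin> Mproj N' p" using notin unfolding Mproj_def by auto
  show ?thesis
  proof (cases "proj_under I N' p")
    case False
    then have full: "card (Mproj N' p) = pcap I p" using pc unfolding proj_under_def by auto
    then have ne: "Mproj N' p \<noteq> {}" using pos by auto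
    have "\<not> prefers_to_worst I l s (Mproj N' p)" using nb2 full unfolding proj_full_def by auto
    then have "\<forall>t\<in>Mproj N' p. (t,s) \<in> lpref I l"
      using not_prefers[OF inst fa(5) fin_proj[OF inst mN'] ne Xp_sub fa(4) s_nXp] by blast
    then show ?thesis using False l_def by auto
  next
    case True
    then have lf: "lec_full I N' l" using nb2 lc unfolding lec_under_def lec_full_def by auto
    then have ne: "Mlec I N' l \<noteq> {}" using pos unfolding lec_full_def by auto
    have s_nXl: "s \<notin> Mlec I N' l" using nb2 True lf by auto
    have "\<not> prefers_to_worst I l s (Mlec I N' l)" using nb2 True lf by auto
    then have A: "\<forall>t\<in>Mlec I N' l. (t,s) \<in> lpref I l"
      using not_prefers[OF inst fa(5) fin_lec[OF inst mN'] ne Xl_sub fa(4) s_nXl] by blast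
    then show ?thesis using lf Xp_Xl l_def by auto
  qed
qed

lemma tri:
  assumes inst: "spa_instance I" and mN: "matching I N" and mN': "matching I N'"
    and a: "assigned N s \<or> assigned N' s"
  shows "s \<in> Same N N' \<or> s \<in> Pset I N N' \<or> s \<in> Pset I N' N"
proof (cases "assigned N s \<and> assigned N' s")
  case True
  then obtain p q where pq: "(s,p) \<in> N" "(s,q) \<in> N'" unfolding assigned_def by auto
  have M1: "Mstu N s = p" "Mstu N' s = q" using m_Mstu[OF mN pq(1)] m_Mstu[OF mN' pq(2)] by auto
  have f: "s \<in> Stu I" "p \<in> acc I s" "q \<in> acc I s" using m_acc[OF inst mN pq(1)] m_acc[OF inst mN' pq(2)] by auto
  have t: "total_on (acc I s) (spref I s)" using stu_ord[OF inst f(1)] by auto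
  show ?thesis
  proof (cases "p = q")
    case True then show ?thesis using pq unfolding Same_def by auto
  next
    case False
    then have "(p,q) \<in> spref I s \<or> (q,p) \<in> spref I s" using t f unfolding total_on_def by blast
    then show ?thesis using True M1 unfolding Pset_def by auto
  qed
next
  case False
  then show ?thesis using a unfolding Pset_def by auto
qed

lemma disj_PP:
  assumes inst: "spa_instance I" and mN: "matching I N"
  shows "Pset I N N' \<inter> Pset I N' N = {}"
proof (rule ccontr)
  assume "Pset I N N' \<inter> Pset I N' N \<noteq> {}"
  then obtain s where s: "s \<in> Pset I N N'" "s \<in> Pset I N' N" by auto
  then have r: "(Mstu N s, Mstu N' s) \<in> spref I s" "(Mstu N' s, Mstu N s) \<in> spref I s"
    unfolding Pset_def by auto
  obtain p where "(s,p) \<in> N" using s unfolding Pset_def assigned_def by auto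
  then have "s \<in> Stu I" using m_acc[OF inst mN] by auto
  then have "trans (spref I s)" "irrefl (spref I s)" using stu_ord[OF inst] by auto
  then show False using r unfolding trans_def irrefl_def by blast
qed

lemma disj_SP:
  assumes inst: "spa_instance I" and mN: "matching I N" and mN': "matching I N'"
  shows "Same N N' \<inter> Pset I N N' = {}"
proof (rule ccontr)
  assume "Same N N' \<inter> Pset I N N' \<noteq> {}"
  then obtain s p where s: "s \<in> Pset I N N'" "(s,p) \<in> N" "(s,p) \<in> N'" unfolding Same_def by auto
  then have "Mstu N s = p" "Mstu N' s = p" "assigned N' s"
    using m_Mstu[OF mN] m_Mstu[OF mN'] unfolding assigned_def by auto
  then have r: "(p,p) \<in> spref I s" using s unfolding Pset_def by auto
  have "s \<in> Stu I" using m_acc[OF inst mN s(2)] by auto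
  then have "irrefl (spref I s)" using stu_ord[OF inst] by auto
  then show False using r unfolding irrefl_def by blast
qed

lemma Same_sym: "Same N N' = Same N' N"
  unfolding Same_def by auto

lemma card_lec:
  assumes inst: "spa_instance I" and mN: "matching I N"
  shows "card (Z \<inter> Mlec I N l) = (\<Sum>p\<in>offered I l. card (Z \<inter> Mproj N p))"
proof -
  have eq: "Z \<inter> Mlec I N l = (\<Union>p\<in>offered I l. Z \<inter> Mproj N p)"
    using m_acc[OF inst mN] unfolding Mlec_def Mproj_def offered_def by auto
  have fo: "finite (offered I l)" using inst unfolding spa_instance_def offered_def by auto
  have "card (\<Union>p\<in>offered I l. Z \<inter> Mproj N p) = (\<Sum>p\<in>offered I l. card (Z \<inter> Mproj N p))"
  proof (rule card_UN_disjoint[OF fo])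
    show "\<forall>i\<in>offered I l. finite (Z \<inter> Mproj N i)" using fin_proj[OF inst mN] by auto
    show "\<forall>i\<in>offered I l. \<forall>j\<in>offered I l. i \<noteq> j \<longrightarrow> Z \<inter> Mproj N i \<inter> (Z \<inter> Mproj N j) = {}"
      using m_fun[OF mN] unfolding Mproj_def by auto
  qed
  then show ?thesis using eq by simp
qed


lemma lasym:
  assumes "spa_instance I" "l \<in> Lec I" "(a,b) \<in> lpref I l" "(b,a) \<in> lpref I l"
  shows False
  using lec_ord[OF assms(1,2)] assms(3,4) unfolding trans_def irrefl_def by blast

lemma Same_lec:
  assumes "matching I N" "matching I N'"
  shows "Same N N' \<inter> Mlec I N l = Same N N' \<inter> Mlec I N' l"
  using m_fun[OF assms(1)] m_fun[OF assms(2)] unfolding Same_def Mlec_def by blast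

lemma Same_proj:
  assumes "matching I N" "matching I N'"
  shows "Same N N' \<inter> Mproj N p = Same N N' \<inter> Mproj N' p"
  using m_fun[OF assms(1)] m_fun[OF assms(2)] unfolding Same_def Mproj_def by blast

lemma card3_le:
  assumes "finite X" "A \<subseteq> X" "B \<subseteq> X" "C \<subseteq> X" "A \<inter> B = {}" "A \<inter> C = {}" "B \<inter> C = {}"
  shows "card A + card B + card C \<le> card X"
proof -
  have f: "finite A" "finite B" "finite C" using assms(1-4) finite_subset by metis+
  have "card (A \<union> B \<union> C) = card A + card B + card C"
    using f assms(5-7) by (simp add: card_Un_disjoint Int_Un_distrib2)
  moreover have "card (A \<union> B \<union> C) \<le> card X" using assms(1-4) by (intro card_mono) auto
  ultimately show ?thesis by simp
qed

lemma card3_ge: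
  assumes "X \<subseteq> A \<union> B \<union> C" "finite A" "finite B" "finite C"
  shows "card X \<le> card A + card B + card C"
proof -
  have "card X \<le> card (A \<union> B \<union> C)" using assms by (intro card_mono) auto
  also have "\<dots> \<le> card (A \<union> B) + card C" by (rule card_Un_le)
  also have "\<dots> \<le> card A + card B + card C" using card_Un_le[of A B] by simp
  finally show ?thesis .
qed

lemma key:
  assumes inst: "spa_instance I" and sN: "stable I N" and sN': "stable I N'" and lL: "l \<in> Lec I"
  shows "card (Pset I N N' \<inter> Mlec I N l) \<le> card (Pset I N N' \<inter> Mlec I N' l)"
proof -
  define P where "P = Pset I N N'"
  define Q where "Q = Pset I N' N"
  define S where "S = Same N N'"
  have mN: "matching I N" using sN unfolding stable_def by auto
  have mN': "matching I N'" using sN' unfolding stable_def by auto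
  have SP: "S \<inter> P = {}" using disj_SP[OF inst mN mN'] S_def P_def by auto
  have SQ: "S \<inter> Q = {}" using disj_SP[OF inst mN' mN] S_def Q_def Same_sym[of N N'] by simp
  have PQ: "P \<inter> Q = {}" using disj_PP[OF inst mN] P_def Q_def by auto
  have fp: "finite (Mproj N p)" "finite (Mproj N' p)" for p
    using fin_proj[OF inst mN] fin_proj[OF inst mN'] by auto
  have fl: "finite (Mlec I N l)" "finite (Mlec I N' l)"
    using fin_lec[OF inst mN] fin_lec[OF inst mN'] by auto
  show ?thesis
  proof (cases "\<exists>s0\<in>P \<inter> Mlec I N l. lec_full I N' l \<and> (\<forall>t\<in>Mlec I N' l. (t,s0) \<in> lpref I l)")
    case True
    then obtain s0 where s0: "s0 \<in> P" "s0 \<in> Mlec I N l" "lec_full I N' l"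
      "\<forall>t\<in>Mlec I N' l. (t,s0) \<in> lpref I l" by blast
    have claim: "card (Q \<inter> Mproj N' p) \<le> card (Q \<inter> Mproj N p)" if pO: "p \<in> offered I l" for p
    proof (cases "Q \<inter> Mproj N' p = {}")
      case True then show ?thesis by simp
    next
      case False
      then obtain t where t: "t \<in> Q" "(t,p) \<in> N'" unfolding Mproj_def by auto
      have lp: "lec I p = l" "p \<in> Proj I" using pO unfolding offered_def by auto
      have ts0: "(t,s0) \<in> lpref I l" using s0(4) t(2) lp unfolding Mlec_def by auto
      have ps: "(\<forall>u\<in>Mproj N p. (u,t) \<in> lpref I l) \<and>
          (proj_under I N p \<longrightarrow> lec_full I N l \<and> (\<forall>u\<in>Mlec I N l. (u,t) \<in> lpref I l))"
        using PS[OF inst mN' sN t(1)[unfolded Q_def] t(2)] lp by simp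
      have nu: "\<not> proj_under I N p"
        using ps s0(2) ts0 lasym[OF inst lL] by blast
      have full: "card (Mproj N p) = pcap I p"
        using nu m_pcap[OF mN lp(2)] unfolding proj_under_def by auto
      have noP: "P \<inter> Mproj N p = {}"
      proof (rule ccontr)
        assume "P \<inter> Mproj N p \<noteq> {}"
        then obtain u where u: "u \<in> P" "(u,p) \<in> N" unfolding Mproj_def by auto
        have "\<forall>x\<in>Mproj N' p. (x,u) \<in> lpref I l"
          using PS[OF inst mN sN' u(1)[unfolded P_def] u(2)] lp by simp
        then have "(t,u) \<in> lpref I l" using t(2) unfolding Mproj_def by auto
        moreover have "(u,t) \<in> lpref I l" using ps u(2) unfolding Mproj_def by auto
        ultimately show False using lasym[OF inst lL] by blast
      qed
      have cov: "Mproj N p \<subseteq> (S \<inter> Mproj N' p) \<union> (Q \<inter> Mproj N p) \<union> {}"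
      proof
        fix u assume u: "u \<in> Mproj N p"
        then have "assigned N u" unfolding Mproj_def assigned_def by auto
        then have "u \<in> S \<or> u \<in> P \<or> u \<in> Q" using tri[OF inst mN mN'] S_def P_def Q_def by blast
        then show "u \<in> (S \<inter> Mproj N' p) \<union> (Q \<inter> Mproj N p) \<union> {}"
          using u noP Same_proj[OF mN mN', of p] S_def by blast
      qed
      have "card (Mproj N p) \<le> card (S \<inter> Mproj N' p) + card (Q \<inter> Mproj N p) + card ({}::'a set)"
        by (rule card3_ge[OF cov]) (use fp in auto)
      moreover have "card (S \<inter> Mproj N' p) + card (Q \<inter> Mproj N' p) + card ({}::'a set) \<le> card (Mproj N' p)"
        by (rule card3_le) (use fp SQ in auto)
      moreover have "card (Mproj N' p) \<le> pcap I p" using m_pcap[OF mN' lp(2)] .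
      ultimately show ?thesis using full by simp
    qed
    have c1: "card (Q \<inter> Mlec I N' l) \<le> card (Q \<inter> Mlec I N l)"
      unfolding card_lec[OF inst mN] card_lec[OF inst mN'] by (rule sum_mono) (rule claim)
    have cov1: "Mlec I N' l \<subseteq> (S \<inter> Mlec I N' l) \<union> (P \<inter> Mlec I N' l) \<union> (Q \<inter> Mlec I N' l)"
    proof
      fix u assume u: "u \<in> Mlec I N' l"
      then have "assigned N' u" unfolding Mlec_def assigned_def by auto
      then have "u \<in> S \<or> u \<in> P \<or> u \<in> Q" using tri[OF inst mN mN'] S_def P_def Q_def by blast
      then show "u \<in> (S \<inter> Mlec I N' l) \<union> (P \<inter> Mlec I N' l) \<union> (Q \<inter> Mlec I N' l)" using u by blast
    qed
    have a1: "card (Mlec I N' l) \<le> card (S \<inter> Mlec I N' l) + card (P \<inter> Mlec I N' l) + card (Q \<inter> Mlec I N' l)"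
      by (rule card3_ge[OF cov1]) (use fl in auto)
    have a2: "card (S \<inter> Mlec I N l) + card (P \<inter> Mlec I N l) + card (Q \<inter> Mlec I N l) \<le> card (Mlec I N l)"
      by (rule card3_le) (use fl SP SQ PQ in auto)
    have a3: "card (Mlec I N l) \<le> card (Mlec I N' l)"
      using m_lcap[OF mN lL] s0(3) unfolding lec_full_def by simp
    have a4: "S \<inter> Mlec I N l = S \<inter> Mlec I N' l" using Same_lec[OF mN mN'] S_def by simp
    show ?thesis using a1 a2 a3 a4 c1 P_def by simp
  next
    case False
    have claim: "card (P \<inter> Mproj N p) \<le> card (P \<inter> Mproj N' p)" if pO: "p \<in> offered I l" for p
    proof (cases "P \<inter> Mproj N p = {}")
      case True then show ?thesis by simp
    next
      case F2: False
      then obtain s where s: "s \<in> P" "(s,p) \<in> N" unfolding Mproj_def by auto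
      have lp: "lec I p = l" "p \<in> Proj I" using pO unfolding offered_def by auto
      have sl: "s \<in> Mlec I N l" using s lp unfolding Mlec_def by auto
      have ps: "(\<forall>u\<in>Mproj N' p. (u,s) \<in> lpref I l) \<and>
          (proj_under I N' p \<longrightarrow> lec_full I N' l \<and> (\<forall>u\<in>Mlec I N' l. (u,s) \<in> lpref I l))"
        using PS[OF inst mN sN' s(1)[unfolded P_def] s(2)] lp by simp
      have nu: "\<not> proj_under I N' p" using ps False s(1) sl by blast
      have full: "card (Mproj N' p) = pcap I p"
        using nu m_pcap[OF mN' lp(2)] unfolding proj_under_def by auto
      have cov: "Mproj N' p \<subseteq> (S \<inter> Mproj N p) \<union> (P \<inter> Mproj N' p) \<union> {}"
      proof
        fix u assume u: "u \<in> Mproj N' p"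
        then have "assigned N' u" unfolding Mproj_def assigned_def by auto
        then have c: "u \<in> S \<or> u \<in> P \<or> u \<in> Q" using tri[OF inst mN mN'] S_def P_def Q_def by blast
        have "u \<notin> Q"
        proof
          assume uQ: "u \<in> Q"
          have "\<forall>x\<in>Mproj N p. (x,u) \<in> lpref I l"
          proof -
            have up: "(u,p) \<in> N'" using u unfolding Mproj_def by auto
            show ?thesis using PS[OF inst mN' sN uQ[unfolded Q_def] up] lp by simp
          qed
          then have "(s,u) \<in> lpref I l" using s(2) unfolding Mproj_def by auto
          moreover have "(u,s) \<in> lpref I l" using ps u by auto
          ultimately show False using lasym[OF inst lL] by blast
        qed
        then show "u \<in> (S \<inter> Mproj N p) \<union> (P \<inter> Mproj N' p) \<union> {}"
          using c u Same_proj[OF mN mN', of p] S_def by blast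
      qed
      have b1: "card (Mproj N' p) \<le> card (S \<inter> Mproj N p) + card (P \<inter> Mproj N' p) + card ({}::'a set)"
        by (rule card3_ge[OF cov]) (use fp in auto)
      have b2: "card (S \<inter> Mproj N p) + card (P \<inter> Mproj N p) + card ({}::'a set) \<le> card (Mproj N p)"
        by (rule card3_le) (use fp SP in auto)
      have b3: "card (Mproj N p) \<le> pcap I p" using m_pcap[OF mN lp(2)] .
      show ?thesis using b1 b2 b3 full by simp
    qed
    show ?thesis
      unfolding P_def[symmetric] card_lec[OF inst mN] card_lec[OF inst mN'] by (rule sum_mono) (rule claim)
  qed
qed


lemma join_ge:
  assumes inst: "spa_instance I" and sN: "stable I N" and sN': "stable I N'" and lL: "l \<in> Lec I"
  shows "card (Mlec I N l) \<le> card (Mlec I (Mjoin I N N') l)"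
proof -
  define P where "P = Pset I N N'"
  define Q where "Q = Pset I N' N"
  define S where "S = Same N N'"
  define J where "J = Mlec I (Mjoin I N N') l"
  have mN: "matching I N" using sN unfolding stable_def by auto
  have mN': "matching I N'" using sN' unfolding stable_def by auto
  have SP: "S \<inter> P = {}" using disj_SP[OF inst mN mN'] S_def P_def by auto
  have SQ: "S \<inter> Q = {}" using disj_SP[OF inst mN' mN] S_def Q_def Same_sym[of N N'] by simp
  have PQ: "P \<inter> Q = {}" using disj_PP[OF inst mN] P_def Q_def by auto
  have fl: "finite (Mlec I N l)" "finite (Mlec I N' l)"
    using fin_lec[OF inst mN] fin_lec[OF inst mN'] by auto
  have fJ: "finite J"
  proof -
    have "J \<subseteq> Stu I" using m_acc[OF inst mN] m_acc[OF inst mN']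
      unfolding J_def Mlec_def Mjoin_def by blast
    moreover have "finite (Stu I)" using inst unfolding spa_instance_def by auto
    ultimately show ?thesis by (rule finite_subset)
  qed
  have cov: "Mlec I N l \<subseteq> (S \<inter> Mlec I N l) \<union> (P \<inter> Mlec I N l) \<union> (Q \<inter> Mlec I N l)"
  proof
    fix u assume u: "u \<in> Mlec I N l"
    then have "assigned N u" unfolding Mlec_def assigned_def by auto
    then have "u \<in> S \<or> u \<in> P \<or> u \<in> Q" using tri[OF inst mN mN'] S_def P_def Q_def by blast
    then show "u \<in> (S \<inter> Mlec I N l) \<union> (P \<inter> Mlec I N l) \<union> (Q \<inter> Mlec I N l)" using u by blast
  qed
  have a1: "card (Mlec I N l) \<le> card (S \<inter> Mlec I N l) + card (P \<inter> Mlec I N l) + card (Q \<inter> Mlec I N l)"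
    by (rule card3_ge[OF cov]) (use fl in auto)
  have k: "card (P \<inter> Mlec I N l) \<le> card (P \<inter> Mlec I N' l)"
    using key[OF inst sN sN' lL] P_def by simp
  have sub1: "S \<inter> Mlec I N l \<subseteq> J"
  proof
    fix u assume "u \<in> S \<inter> Mlec I N l"
    then obtain p q where "(u,p) \<in> N" "lec I p = l" "(u,q) \<in> N" "(u,q) \<in> N'"
      unfolding S_def Same_def Mlec_def by auto
    then show "u \<in> J" using m_fun[OF mN] unfolding J_def Mlec_def Mjoin_def by blast
  qed
  have sub2: "P \<inter> Mlec I N' l \<subseteq> J"
  proof
    fix u assume u: "u \<in> P \<inter> Mlec I N' l"
    then obtain q where q: "(u,q) \<in> N'" "lec I q = l" unfolding Mlec_def by auto
    obtain p where p: "(u,p) \<in> N" using u unfolding P_def Pset_def assigned_def by auto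
    have "(p,q) \<in> spref I u" using u q p m_Mstu[OF mN p] m_Mstu[OF mN' q(1)]
      unfolding P_def Pset_def assigned_def by auto
    then show "u \<in> J" using p q unfolding J_def Mlec_def Mjoin_def by blast
  qed
  have sub3: "Q \<inter> Mlec I N l \<subseteq> J"
  proof
    fix u assume u: "u \<in> Q \<inter> Mlec I N l"
    then obtain p where p: "(u,p) \<in> N" "lec I p = l" unfolding Mlec_def by auto
    obtain q where q: "(u,q) \<in> N'" using u unfolding Q_def Pset_def assigned_def by auto
    have "(q,p) \<in> spref I u" using u q p m_Mstu[OF mN p(1)] m_Mstu[OF mN' q]
      unfolding Q_def Pset_def assigned_def by auto
    then show "u \<in> J" using p q unfolding J_def Mlec_def Mjoin_def by blast
  qed
  have a2: "card (S \<inter> Mlec I N l) + card (P \<inter> Mlec I N' l) + card (Q \<inter> Mlec I N l) \<le> card J"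
    by (rule card3_le[OF fJ sub1 sub2 sub3]) (use SP SQ PQ in auto)
  show ?thesis using a1 a2 k J_def by simp
qed

lemma Mjoin_sym: "Mjoin I M M' = Mjoin I M' M"
  unfolding Mjoin_def by auto

theorem lemma9:
  fixes I :: "('s,'p,'l) spa"
    and M M' :: "('s \<times> 'p) set"
    and l :: 'l
  assumes "spa_instance I"
    and "stable I M" and "stable I M'"
    and "l \<in> Lec I"
    and "lec_under I (Mjoin I M M') l"
  shows "lec_under I M l \<and> lec_under I M' l"
proof -
  have "card (Mlec I M l) \<le> card (Mlec I (Mjoin I M M') l)"
    using join_ge[OF assms(1,2,3,4)] .
  moreover have "card (Mlec I M' l) \<le> card (Mlec I (Mjoin I M M') l)"
    using join_ge[OF assms(1,3,2,4)] Mjoin_sym[of I M' M] by simp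
  ultimately show ?thesis using assms(5) unfolding lec_under_def by simp
qed

end
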